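(* Let $M$ be a $2\times2$ quaternionic matrix and $A\in SL_2\mathcal{V}$. Then $\mathrm{pdet}(AM)=\mathrm{pdet}(M)$.
   Context: For $q=a+bi+cj+dk\in\mathbb{H}$, $q^*=a+bi+cj-dk$. $\mathcal{V}=\mathrm{span}_\mathbb{R}\{1,i,j\}$. For a quaternionic matrix $\begin{pmatrix}a&b\\c&d\end{pmatrix}$, $\mathrm{pdet}=a^*d-c^*b$. $SL_2\mathcal{V}$ is the set of quaternionic matrices $\begin{pmatrix}a&b\\c&d\end{pmatrix}$ with $ab^*,cd^*,c^*a,d^*b,ba^*,dc^*,a^*c,b^*d\in\mathcal{V}$ and $ad^*-bc^*=da^*-cb^*=d^*a-b^*c=a^*d-c^*b=1$. *)

theory Defs
  imports "HOL-Analysis.Analysis"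
begin

codatatype quat = Quat (Re: real) (Im1: real) (Im2: real) (Im3: real)

lemma quat_eqI [intro?]:
  "\<lbrakk>Re x = Re y; Im1 x = Im1 y; Im2 x = Im2 y; Im3 x = Im3 y\<rbrakk> \<Longrightarrow> x = y"
  by (rule quat.expand) simp

lemma quat_eq_iff:
  "x = y \<longleftrightarrow> Re x = Re y \<and> Im1 x = Im1 y \<and> Im2 x = Im2 y \<and> Im3 x = Im3 y"
  by (auto intro: quat_eqI)

instantiation quat :: ring_1
begin

primcorec zero_quat where
  "Re 0 = 0" | "Im1 0 = 0" | "Im2 0 = 0" | "Im3 0 = 0"

primcorec one_quat where
  "Re 1 = 1" | "Im1 1 = 0" | "Im2 1 = 0" | "Im3 1 = 0"

primcorec plus_quat where
  "Re (x + y) = Re x + Re y" | "Im1 (x + y) = Im1 x + Im1 y"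
| "Im2 (x + y) = Im2 x + Im2 y" | "Im3 (x + y) = Im3 x + Im3 y"

primcorec uminus_quat where
  "Re (- x) = - Re x" | "Im1 (- x) = - Im1 x"
| "Im2 (- x) = - Im2 x" | "Im3 (- x) = - Im3 x"

primcorec minus_quat where
  "Re (x - y) = Re x - Re y" | "Im1 (x - y) = Im1 x - Im1 y"
| "Im2 (x - y) = Im2 x - Im2 y" | "Im3 (x - y) = Im3 x - Im3 y"

text \<open>Hamilton product with i^2 = j^2 = k^2 = ijk = -1.\<close>
primcorec times_quat where
  "Re (x * y) = Re x * Re y - Im1 x * Im1 y - Im2 x * Im2 y - Im3 x * Im3 y"
| "Im1 (x * y) = Re x * Im1 y + Im1 x * Re y + Im2 x * Im3 y - Im3 x * Im2 y"
| "Im2 (x * y) = Re x * Im2 y - Im1 x * Im3 y + Im2 x * Re y + Im3 x * Im1 y"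
| "Im3 (x * y) = Re x * Im3 y + Im1 x * Im2 y - Im2 x * Im1 y + Im3 x * Re y"

instance
  by standard (auto simp: quat_eq_iff algebra_simps)

end

definition qstar :: "quat \<Rightarrow> quat" where
  "qstar q = Quat (Re q) (Im1 q) (Im2 q) (- Im3 q)"

definition Vspace :: "quat set" where
  "Vspace = {q. Im3 q = 0}"

text \<open>2x2 quaternionic matrices, entries indexed by 1,2; \<open>(a b; c d)\<close>.\<close>
type_synonym qmat = "quat ^ 2 ^ 2"

definition pdet :: "qmat \<Rightarrow> quat" where
  "pdet M = (let a = M$1$1; b = M$1$2; c = M$2$1; d = M$2$2
             in qstar a * d - qstar c * b)"

definition SL2V :: "qmat set" where
  "SL2V = {M. let a = M$1$1; b = M$1$2; c = M$2$1; d = M$2$2 in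
     a * qstar b \<in> Vspace \<and> c * qstar d \<in> Vspace \<and> qstar c * a \<in> Vspace \<and>
     qstar d * b \<in> Vspace \<and> b * qstar a \<in> Vspace \<and> d * qstar c \<in> Vspace \<and>
     qstar a * c \<in> Vspace \<and> qstar b * d \<in> Vspace \<and>
     a * qstar d - b * qstar c = 1 \<and> d * qstar a - c * qstar b = 1 \<and>
     qstar d * a - qstar b * c = 1 \<and> qstar a * d - qstar c * b = 1}"

end

theory Submission
  imports Defs
begin

lemma qstar_mult: "qstar (x * y) = qstar y * qstar x"
  by (simp add: qstar_def quat_eq_iff algebra_simps)

lemma qstar_add: "qstar (x + y) = qstar x + qstar y"
  by (simp add: qstar_def quat_eq_iff)

lemma qstar_diff: "qstar (x - y) = qstar x - qstar y"
  by (simp add: qstar_def quat_eq_iff)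

lemma qstar_qstar: "qstar (qstar x) = x"
  by (simp add: qstar_def quat_eq_iff)

lemma qstar_V: "v \<in> Vspace \<Longrightarrow> qstar v = v"
  by (simp add: qstar_def quat_eq_iff Vspace_def)

lemma comm_V: "qstar a * c \<in> Vspace \<Longrightarrow> qstar a * c = qstar c * a"
  using qstar_V[of "qstar a * c"] by (simp add: qstar_mult qstar_qstar)

theorem lemma3p20:
  fixes M A :: qmat
  assumes "A \<in> SL2V"
  shows "pdet (A ** M) = pdet M"
proof -
  define a b c d where "a = A$1$1" "b = A$1$2" "c = A$2$1" "d = A$2$2"
  define m n p q where "m = M$1$1" "n = M$1$2" "p = M$2$1" "q = M$2$2"
  have ac: "qstar a * c = qstar c * a" and bd: "qstar b * d = qstar d * b"
    and h1: "qstar a * d - qstar c * b = 1" and h2: "qstar d * a - qstar b * c = 1"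
    using assms comm_V unfolding SL2V_def a_b_c_d_def Let_def by auto
  have e: "(A ** M)$1$1 = a*m + b*p" "(A ** M)$1$2 = a*n + b*q"
     "(A ** M)$2$1 = c*m + d*p" "(A ** M)$2$2 = c*n + d*q"
    by (simp_all add: matrix_matrix_mult_def sum_2 a_b_c_d_def m_n_p_q_def)
  have "pdet (A ** M) = (qstar m * qstar a + qstar p * qstar b) * (c*n + d*q)
        - (qstar m * qstar c + qstar p * qstar d) * (a*n + b*q)"
    unfolding pdet_def Let_def e by (simp add: qstar_add qstar_mult)
  also have "\<dots> = qstar m * (qstar a * c - qstar c * a) * n + qstar m * (qstar a * d - qstar c * b) * q
       - qstar p * (qstar d * a - qstar b * c) * n + qstar p * (qstar b * d - qstar d * b) * q"
    by (simp add: algebra_simps)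
  also have "\<dots> = qstar m * q - qstar p * n"
    using ac bd h1 h2 by simp
  also have "\<dots> = pdet M" unfolding pdet_def Let_def m_n_p_q_def by simp
  finally show ?thesis .
qed

end
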